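(* Let $P=P_0+P_\delta\in\mathbb{R}^{p\times m}$, $Y_d\in\mathbb{R}^p$, plant $Y_k=PU_k+N_k$, $E_k=Y_d-Y_k$, $\bar U_k=-\Delta U_k$, $D_k=-\Delta N_k$, $\mathcal D_k=D_k+P_\delta\bar U_k$ (so $E_{k+1}=E_k+P_0\bar U_k+\mathcal D_k$), $\bar B_0=\begin{bmatrix}P_0\\0\end{bmatrix}$, $\bar L\in\mathbb{R}^{2p\times p}$, and the ESO $\hat{\bar{\mathcal X}}_{k+1}=(\bar A-\bar L\bar C)\hat{\bar{\mathcal X}}_k+\bar B_0\bar U_k+\bar LE_k$, $\hat{\bar{\mathcal X}}_k=\begin{bmatrix}\hat E_k\\\hat{\mathcal D}_k\end{bmatrix}$. Let $K\in\mathbb{R}^{m\times p}$, $\bar H\in\mathbb{R}^{p\times p}$, and apply $\bar U_k=-K(E_k+\bar H\hat{\mathcal D}_k)$. Then $\begin{bmatrix}E_{k+1}\\\hat{\bar{\mathcal X}}_{k+1}\end{bmatrix}=G\begin{bmatrix}E_{k}\\\hat{\bar{\mathcal X}}_{k}\end{bmatrix}+\begin{bmatrix}I\\0\end{bmatrix}\mathcal D_k$ with $G=\begin{bmatrix}I-P_0K&-P_0K\bar HF\\\bar L-\bar B_0K&\bar A-\bar L\bar C-\bar B_0K\bar HF\end{bmatrix}$, and with $T=\begin{bmatrix}I&0\\-\bar C^{\top}&I\end{bmatrix}$ one has $TGT^{-1}=\begin{bmatrix}I-P_0K&-P_0K\bar HF\\0&\bar A-\bar L\bar C\end{bmatrix}$.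 Hence the separation principle holds: the eigenvalues of $G$ are those of $I-P_0K$ together with those of $\bar A-\bar L\bar C$, and $K$, $\bar H$, $\bar L$ can be designed separately.
   Context: $\mathbb{Z}_+=\{0,1,2,\dots\}$; $\Delta f_k=f_{k+1}-f_k$. $U_k\in\mathbb{R}^m$ input, $Y_k\in\mathbb{R}^p$ output, $(N_k)\subset\mathbb{R}^p$ a bounded uncertainty; $P_0$ is a known nominal model and $P_\delta$ an unknown model uncertainty. $\bar A=\begin{bmatrix}I_p&I_p\\0&I_p\end{bmatrix}$, $\bar C=\begin{bmatrix}I_p&0\end{bmatrix}$, $F=\begin{bmatrix}0&I_p\end{bmatrix}$. *)

theory Defs
  imports "Jordan_Normal_Form.Matrix" "Jordan_Normal_Form.Char_Poly"
begin

definition Abar :: "nat \<Rightarrow> real mat" where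
  "Abar p = four_block_mat (1\<^sub>m p) (1\<^sub>m p) (0\<^sub>m p p) (1\<^sub>m p)"

definition Cbar :: "nat \<Rightarrow> real mat" where   (* [I_p  0], p x 2p *)
  "Cbar p = four_block_mat (1\<^sub>m p) (0\<^sub>m p p) (0\<^sub>m 0 p) (0\<^sub>m 0 p)"

definition Fm :: "nat \<Rightarrow> real mat" where     (* [0  I_p], p x 2p *)
  "Fm p = four_block_mat (0\<^sub>m p p) (1\<^sub>m p) (0\<^sub>m 0 p) (0\<^sub>m 0 p)"

definition B0 :: "nat \<Rightarrow> real mat \<Rightarrow> real mat" where   (* [P0; 0], 2p x m *)
  "B0 p P0 = four_block_mat P0 (0\<^sub>m p 0) (0\<^sub>m p (dim_col P0)) (0\<^sub>m p 0)"

definition Gmat :: "nat \<Rightarrow> real mat \<Rightarrow> real mat \<Rightarrow> real mat \<Rightarrow> real mat \<Rightarrow> real mat" where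
  "Gmat p P0 K H L = four_block_mat
     (1\<^sub>m p - P0 * K)               (- (P0 * K * H * Fm p))
     (L - B0 p P0 * K)  (Abar p - L * Cbar p - B0 p P0 * K * H * Fm p)"

definition Tmat :: "nat \<Rightarrow> real mat" where
  "Tmat p = four_block_mat (1\<^sub>m p) (0\<^sub>m p (2*p)) (- transpose_mat (Cbar p)) (1\<^sub>m (2*p))"

definition Tinv :: "nat \<Rightarrow> real mat" where
  "Tinv p = four_block_mat (1\<^sub>m p) (0\<^sub>m p (2*p)) (transpose_mat (Cbar p)) (1\<^sub>m (2*p))"

end

theory Submission
  imports Defs
begin

declare minus_carrier_mat[simp]

lemma uml: "(A :: real mat) \<in> carrier_mat n k \<Longrightarrow> B \<in> carrier_mat k l \<Longrightarrow> - A * B = - (A * B)"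
  by (rule uminus_mult_left_mat) auto
lemma umr: "(A :: real mat) \<in> carrier_mat n k \<Longrightarrow> B \<in> carrier_mat k l \<Longrightarrow> A * - B = - (A * B)"
  by (rule uminus_mult_right_mat) auto

lemma Cbar_c: "Cbar p \<in> carrier_mat p (2*p)"
proof -
  have "Cbar p \<in> carrier_mat (p+0) (p+p)" unfolding Cbar_def by (rule four_block_carrier_mat) auto
  thus ?thesis by (simp add: mult_2)
qed
lemma Fm_c: "Fm p \<in> carrier_mat p (2*p)"
proof -
  have "Fm p \<in> carrier_mat (p+0) (p+p)" unfolding Fm_def by (rule four_block_carrier_mat) auto
  thus ?thesis by (simp add: mult_2)
qed
lemma Abar_c: "Abar p \<in> carrier_mat (2*p) (2*p)"
proof -
  have "Abar p \<in> carrier_mat (p+p) (p+p)" unfolding Abar_def by (rule four_block_carrier_mat) auto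
  thus ?thesis by (simp add: mult_2)
qed
lemma B0_c: "P0 \<in> carrier_mat p m \<Longrightarrow> B0 p P0 \<in> carrier_mat (2*p) m"
proof -
  assume P0: "P0 \<in> carrier_mat p m"
  have "B0 p P0 \<in> carrier_mat (p+p) (m+0)" unfolding B0_def using P0 by (intro four_block_carrier_mat) auto
  thus ?thesis by (simp add: mult_2)
qed
lemma CT_c: "transpose_mat (Cbar p) \<in> carrier_mat (2*p) p" using Cbar_c by auto
lemma CT_eq: "transpose_mat (Cbar p) = four_block_mat (1\<^sub>m p) (0\<^sub>m p 0) (0\<^sub>m p p) (0\<^sub>m p 0)"
  unfolding Cbar_def
  by (subst transpose_four_block_mat[OF one_carrier_mat zero_carrier_mat zero_carrier_mat zero_carrier_mat]) simp
lemma FCT: "Fm p * transpose_mat (Cbar p) = 0\<^sub>m p p"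
  unfolding CT_eq Fm_def
  by (subst mult_four_block_mat[OF zero_carrier_mat one_carrier_mat zero_carrier_mat zero_carrier_mat
      one_carrier_mat zero_carrier_mat zero_carrier_mat zero_carrier_mat]) (rule eq_matI, auto)
lemma CCT: "Cbar p * transpose_mat (Cbar p) = 1\<^sub>m p"
  unfolding CT_eq unfolding Cbar_def
  by (subst mult_four_block_mat[OF one_carrier_mat zero_carrier_mat zero_carrier_mat zero_carrier_mat
      one_carrier_mat zero_carrier_mat zero_carrier_mat zero_carrier_mat]) (rule eq_matI, auto)
lemma ACT: "Abar p * transpose_mat (Cbar p) = transpose_mat (Cbar p)"
  unfolding CT_eq Abar_def
  by (subst mult_four_block_mat[OF one_carrier_mat one_carrier_mat zero_carrier_mat one_carrier_mat
      one_carrier_mat zero_carrier_mat zero_carrier_mat zero_carrier_mat]) (rule eq_matI, auto)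
lemma CTP: assumes P0: "P0 \<in> carrier_mat p m" shows "transpose_mat (Cbar p) * P0 = B0 p P0"
proof -
  have e: "four_block_mat P0 (0\<^sub>m p 0) (0\<^sub>m 0 m) (0\<^sub>m 0 0) = P0"
    by (rule eq_matI, insert P0, auto)
  have "four_block_mat (1\<^sub>m p) (0\<^sub>m p 0) (0\<^sub>m p p) (0\<^sub>m p 0) * four_block_mat P0 (0\<^sub>m p 0) (0\<^sub>m 0 m) (0\<^sub>m 0 0) = B0 p P0"
    unfolding B0_def
    by (subst mult_four_block_mat[OF one_carrier_mat zero_carrier_mat zero_carrier_mat zero_carrier_mat
      P0 zero_carrier_mat zero_carrier_mat zero_carrier_mat]) (rule eq_matI, insert P0, auto)
  thus ?thesis unfolding e CT_eq .
qed

lemma TTinv: "Tmat p * Tinv p = 1\<^sub>m (3*p) \<and> Tinv p * Tmat p = 1\<^sub>m (3*p)"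
proof -
  have e: "3*p = p + 2*p" by simp
  note CT = CT_c[of p]
  have z: "- transpose_mat (Cbar p) + transpose_mat (Cbar p) = 0\<^sub>m (2*p) p"
       "transpose_mat (Cbar p) + - transpose_mat (Cbar p) = 0\<^sub>m (2*p) p"
    by (rule eq_matI, insert CT, auto)+
  have z2: "1\<^sub>m p + - 0\<^sub>m p p = (1\<^sub>m p :: real mat)" by (rule eq_matI, auto)
  have "Tmat p * Tinv p = 1\<^sub>m (p + 2*p)" unfolding Tmat_def Tinv_def
    by (subst mult_four_block_mat[OF one_carrier_mat zero_carrier_mat uminus_carrier_mat[OF CT] one_carrier_mat
      one_carrier_mat zero_carrier_mat CT one_carrier_mat], insert CT z z2, simp)
  moreover have "Tinv p * Tmat p = 1\<^sub>m (p + 2*p)" unfolding Tmat_def Tinv_def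
    by (subst mult_four_block_mat[OF one_carrier_mat zero_carrier_mat CT one_carrier_mat
      one_carrier_mat zero_carrier_mat uminus_carrier_mat[OF CT] one_carrier_mat], insert CT z z2, simp)
  ultimately show ?thesis unfolding e by simp
qed

lemma TGT: assumes P0: "P0 \<in> carrier_mat p m" and K: "K \<in> carrier_mat m p" and H: "H \<in> carrier_mat p p"
    and L: "L \<in> carrier_mat (2*p) p"
  shows "Tmat p * Gmat p P0 K H L * Tinv p
           = four_block_mat (1\<^sub>m p - P0 * K) (- (P0 * K * H * Fm p))
                            (0\<^sub>m (2*p) p) (Abar p - L * Cbar p)"
proof -
  define CT where "CT = transpose_mat (Cbar p)"
  define G11 where "G11 = 1\<^sub>m p - P0 * K"
  define G12 where "G12 = - (P0 * K * H * Fm p)"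
  define G21 where "G21 = L - B0 p P0 * K"
  define G22 where "G22 = Abar p - L * Cbar p - B0 p P0 * K * H * Fm p"
  note C = Cbar_c[of p] and F = Fm_c[of p] and A = Abar_c[of p] and B = B0_c[OF P0]
  have CT: "CT \<in> carrier_mat (2*p) p" unfolding CT_def by (rule CT_c)
  have PK: "P0 * K \<in> carrier_mat p p" using P0 K by simp
  have PKH: "P0 * K * H \<in> carrier_mat p p" using PK H by simp
  have PKHF: "P0 * K * H * Fm p \<in> carrier_mat p (2*p)" using PKH F by simp
  have BK: "B0 p P0 * K \<in> carrier_mat (2*p) p" using B K by simp
  have BKH: "B0 p P0 * K * H \<in> carrier_mat (2*p) p" using BK H by simp
  have BKHF: "B0 p P0 * K * H * Fm p \<in> carrier_mat (2*p) (2*p)" using BKH F by simp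
  have LC: "L * Cbar p \<in> carrier_mat (2*p) (2*p)" using L C by simp
  have ALC: "Abar p - L * Cbar p \<in> carrier_mat (2*p) (2*p)" using A LC by simp
  have c11: "G11 \<in> carrier_mat p p" unfolding G11_def using PK by simp
  have c12: "G12 \<in> carrier_mat p (2*p)" unfolding G12_def using PKHF by simp
  have c21: "G21 \<in> carrier_mat (2*p) p" unfolding G21_def using L BK by simp
  have c22: "G22 \<in> carrier_mat (2*p) (2*p)" unfolding G22_def using ALC BKHF by simp
  have CG11: "CT * G11 \<in> carrier_mat (2*p) p" using CT c11 by simp
  have CG12: "CT * G12 \<in> carrier_mat (2*p) (2*p)" using CT c12 by simp
  have G: "Gmat p P0 K H L = four_block_mat G11 G12 G21 G22"
    unfolding Gmat_def G11_def G12_def G21_def G22_def ..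
  have TG: "Tmat p * Gmat p P0 K H L = four_block_mat G11 G12 (- (CT * G11) + G21) (- (CT * G12) + G22)"
    unfolding G Tmat_def CT_def[symmetric]
    by (subst mult_four_block_mat[OF one_carrier_mat zero_carrier_mat uminus_carrier_mat[OF CT] one_carrier_mat
      c11 c12 c21 c22], insert c11 c12 c21 c22 CT, simp)
  have x21: "- (CT * G11) + G21 \<in> carrier_mat (2*p) p" using CG11 c21 by simp
  have x22: "- (CT * G12) + G22 \<in> carrier_mat (2*p) (2*p)" using CG12 c22 by simp
  have TGT: "Tmat p * Gmat p P0 K H L * Tinv p = four_block_mat (G11 + G12 * CT) G12 
      ((- (CT * G11) + G21) + (- (CT * G12) + G22) * CT) (- (CT * G12) + G22)"
    unfolding TG Tinv_def CT_def[symmetric]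
    by (subst mult_four_block_mat[OF c11 c12 x21 x22 one_carrier_mat zero_carrier_mat CT one_carrier_mat],
      insert c11 c12 x21 x22 CT, simp add: right_mult_one_mat[OF x21] right_mult_zero_mat[OF x21] right_mult_one_mat[OF x22] right_mult_one_mat[OF c11] right_mult_zero_mat[OF c11] right_mult_one_mat[OF c12])
  have FCT': "Fm p * CT = 0\<^sub>m p p" unfolding CT_def by (rule FCT)
  have CTP': "CT * P0 = B0 p P0" unfolding CT_def by (rule CTP[OF P0])
  have CCT': "Cbar p * CT = 1\<^sub>m p" unfolding CT_def by (rule CCT)
  have ACT': "Abar p * CT = CT" unfolding CT_def by (rule ACT)
  have h1: "G12 * CT = 0\<^sub>m p p"
  proof -
    have "G12 * CT = - (P0 * K * H * Fm p * CT)" unfolding G12_def by (rule uml[OF PKHF CT])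
    also have "P0 * K * H * Fm p * CT = P0 * K * H * (Fm p * CT)"
      by (rule assoc_mult_mat[OF PKH F CT])
    finally show ?thesis unfolding FCT' right_mult_zero_mat[OF PKH] by (intro eq_matI) auto
  qed
  have h2: "CT * G11 = CT - B0 p P0 * K"
  proof -
    have "CT * G11 = CT * 1\<^sub>m p - CT * (P0 * K)" unfolding G11_def
      by (rule mult_minus_distrib_mat[OF CT one_carrier_mat PK])
    also have "CT * (P0 * K) = CT * P0 * K" by (rule assoc_mult_mat[OF CT P0 K, symmetric])
    finally show ?thesis unfolding CTP' using CT by simp
  qed
  have h3: "CT * G12 = - (B0 p P0 * K * H * Fm p)"
  proof -
    have "CT * G12 = - (CT * (P0 * K * H * Fm p))" unfolding G12_def by (rule umr[OF CT PKHF])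
    also have "CT * (P0 * K * H * Fm p) = B0 p P0 * K * H * Fm p" unfolding CTP'[symmetric]
      by (simp only: assoc_mult_mat[OF CT P0 K] assoc_mult_mat[OF CT PK H] assoc_mult_mat[OF CT PKH F])
    finally show ?thesis .
  qed
  have h4: "G22 * CT = CT - L"
  proof -
    have "G22 * CT = (Abar p - L * Cbar p) * CT - B0 p P0 * K * H * Fm p * CT"
      unfolding G22_def by (rule minus_mult_distrib_mat[OF ALC BKHF CT])
    also have "(Abar p - L * Cbar p) * CT = Abar p * CT - L * Cbar p * CT"
      by (rule minus_mult_distrib_mat[OF A LC CT])
    also have "L * Cbar p * CT = L * (Cbar p * CT)" by (rule assoc_mult_mat[OF L C CT])
    also have "B0 p P0 * K * H * Fm p * CT = B0 p P0 * K * H * (Fm p * CT)" by (rule assoc_mult_mat[OF BKH F CT])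
    finally show ?thesis unfolding ACT' CCT' FCT' right_mult_zero_mat[OF BKH] right_mult_one_mat[OF L]
      using L BKH CT by (intro eq_matI) auto
  qed
  have h5: "(- (CT * G12) + G22) * CT = CT - L"
  proof -
    have "(- (CT * G12) + G22) * CT = - (CT * G12) * CT + G22 * CT"
      by (rule add_mult_distrib_mat[OF uminus_carrier_mat[OF CG12] c22 CT])
    also have "- (CT * G12) * CT = - (CT * (G12 * CT))" using CT c12 by (simp add: uml[OF CG12 CT])
    finally show ?thesis unfolding h1 h4 using CT L by (intro eq_matI) auto
  qed
  show ?thesis unfolding TGT h1 h5 unfolding h2 h3
  proof (rule cong_four_block_mat)
    show "G11 + 0\<^sub>m p p = 1\<^sub>m p - P0 * K" using c11 unfolding G11_def by simp
    show "G12 = - (P0 * K * H * Fm p)" unfolding G12_def ..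
    show "- (CT - B0 p P0 * K) + G21 + (CT - L) = 0\<^sub>m (2 * p) p"
      unfolding G21_def by (rule eq_matI, simp_all add: carrier_matD[OF CT] carrier_matD[OF B] carrier_matD[OF K] carrier_matD[OF L])
    show "- (- (B0 p P0 * K * H * Fm p)) + G22 = Abar p - L * Cbar p"
      unfolding G22_def by (rule eq_matI, simp_all add: carrier_matD[OF B] carrier_matD[OF F] carrier_matD[OF A] carrier_matD[OF C] carrier_matD[OF L])
  qed
qed

lemma char_poly_block_ut: fixes A1 A2 A3 :: "'a :: idom mat"
  assumes A1: "A1 \<in> carrier_mat n n" and A2: "A2 \<in> carrier_mat n k" and A3: "A3 \<in> carrier_mat k k"
  shows "char_poly (four_block_mat A1 A2 (0\<^sub>m k n) A3) = char_poly A1 * char_poly A3"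
proof -
  let ?cm = "\<lambda> A. [:0, 1:] \<cdot>\<^sub>m 1\<^sub>m (dim_row A) +
         map_mat (\<lambda>a. [:- a:]) A"
  let ?B2 = "map_mat (\<lambda>a. [:- a:]) A2"
  have "char_poly (four_block_mat A1 A2 (0\<^sub>m k n) A3) = det (?cm (four_block_mat A1 A2 (0\<^sub>m k n) A3))"
    unfolding char_poly_defs using A1 A3 by simp
  also have "?cm (four_block_mat A1 A2 (0\<^sub>m k n) A3) = four_block_mat (?cm A1) ?B2 (0\<^sub>m k n) (?cm A3)"
    by (rule eq_matI, insert A1 A2 A3, auto simp: one_poly_def)
  also have "det \<dots> = det (?cm A1) * det (?cm A3)"
    by (rule det_four_block_mat_lower_left_zero, insert A1 A2 A3, auto)
  also have "\<dots> = char_poly A1 * char_poly A3" unfolding char_poly_defs ..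
  finally show ?thesis .
qed

lemma Gc: assumes P0: "P0 \<in> carrier_mat p m" and K: "K \<in> carrier_mat m p" and H: "H \<in> carrier_mat p p"
    and L: "L \<in> carrier_mat (2*p) p"
  shows "Gmat p P0 K H L \<in> carrier_mat (3*p) (3*p)"
proof -
  note C = Cbar_c[of p] and F = Fm_c[of p] and A = Abar_c[of p] and B = B0_c[OF P0]
  have PK: "P0 * K \<in> carrier_mat p p" using P0 K by simp
  have PKHF: "P0 * K * H * Fm p \<in> carrier_mat p (2*p)" using PK H F by simp
  have BK: "B0 p P0 * K \<in> carrier_mat (2*p) p" using B K by simp
  have BKHF: "B0 p P0 * K * H * Fm p \<in> carrier_mat (2*p) (2*p)" using BK H F by simp
  have LC: "L * Cbar p \<in> carrier_mat (2*p) (2*p)" using L C by simp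
  have "Gmat p P0 K H L \<in> carrier_mat (p + 2*p) (p + 2*p)" unfolding Gmat_def
    by (rule four_block_carrier_mat; simp add: PK PKHF BK BKHF LC A L)
  thus ?thesis by simp
qed

lemma Tc: "Tmat p \<in> carrier_mat (3*p) (3*p)" "Tinv p \<in> carrier_mat (3*p) (3*p)"
proof -
  have "Tmat p \<in> carrier_mat (p + 2*p) (p + 2*p)" unfolding Tmat_def
    by (rule four_block_carrier_mat; simp add: CT_c)
  thus "Tmat p \<in> carrier_mat (3*p) (3*p)" by simp
  have "Tinv p \<in> carrier_mat (p + 2*p) (p + 2*p)" unfolding Tinv_def
    by (rule four_block_carrier_mat; simp add: CT_c)
  thus "Tinv p \<in> carrier_mat (3*p) (3*p)" by simp
qed

lemma cp_G: assumes P0: "P0 \<in> carrier_mat p m" and K: "K \<in> carrier_mat m p" and H: "H \<in> carrier_mat p p"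
    and L: "L \<in> carrier_mat (2*p) p"
  shows "char_poly (Gmat p P0 K H L) = char_poly (1\<^sub>m p - P0 * K) * char_poly (Abar p - L * Cbar p)"
proof -
  note C = Cbar_c[of p] and F = Fm_c[of p] and A = Abar_c[of p] and B = B0_c[OF P0]
  have PK: "P0 * K \<in> carrier_mat p p" using P0 K by simp
  have PKHF: "P0 * K * H * Fm p \<in> carrier_mat p (2*p)" using PK H F by simp
  have LC: "L * Cbar p \<in> carrier_mat (2*p) (2*p)" using L C by simp
  have "similar_mat (Tmat p * Gmat p P0 K H L * Tinv p) (Gmat p P0 K H L)"
    unfolding similar_mat_def
    by (rule exI[of _ "Tmat p"], rule exI[of _ "Tinv p"], rule similar_mat_witI[of _ _ "3*p"],
        insert TTinv[of p] Gc[OF P0 K H L] Tc[of p], auto intro!: mult_carrier_mat[of _ "3*p" "3*p"])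
  from char_poly_similar[OF this] TGT[OF P0 K H L]
  have "char_poly (Gmat p P0 K H L) = char_poly (four_block_mat (1\<^sub>m p - P0 * K) (- (P0 * K * H * Fm p))
                            (0\<^sub>m (2*p) p) (Abar p - L * Cbar p))" by simp
  also have "\<dots> = char_poly (1\<^sub>m p - P0 * K) * char_poly (Abar p - L * Cbar p)"
    by (rule char_poly_block_ut, insert PK PKHF A LC, auto)
  finally show ?thesis .
qed

lemma neg_mv: "(A :: real mat) \<in> carrier_mat n m \<Longrightarrow> v \<in> carrier_vec m \<Longrightarrow> A *\<^sub>v (- v) = - (A *\<^sub>v v)"
proof -
  assume A: "A \<in> carrier_mat n m" and v: "v \<in> carrier_vec m"
  show ?thesis
  proof (rule eq_vecI)
    fix i assume "i < dim_vec (- (A *\<^sub>v v))"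
    hence i: "i < n" using A by simp
    have d: "dim_vec (row A i) = dim_vec v" using A v by simp
    have "row A i \<bullet> - v = - (row A i \<bullet> v)" by (rule scalar_prod_uminus_right[OF d])
    thus "(A *\<^sub>v - v) $ i = (- (A *\<^sub>v v)) $ i" using i A by simp
  qed (insert A, simp)
qed

theorem lemma6:
  fixes p m :: nat
    and P0 Pd K H L :: "real mat"
    and Yd :: "real vec"
    and U N Y E Ubar D Dcal Xhat :: "nat \<Rightarrow> real vec"
  assumes P0: "P0 \<in> carrier_mat p m" and Pd: "Pd \<in> carrier_mat p m"
    and K: "K \<in> carrier_mat m p" and H: "H \<in> carrier_mat p p"
    and L: "L \<in> carrier_mat (2*p) p"
    and Yd: "Yd \<in> carrier_vec p"
    and U: "\<And>k. U k \<in> carrier_vec m" and N: "\<And>k. N k \<in> carrier_vec p"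
    and Xhat: "\<And>k. Xhat k \<in> carrier_vec (2*p)"
    and plant: "\<And>k. Y k = (P0 + Pd) *\<^sub>v U k + N k"
    and err: "\<And>k. E k = Yd - Y k"
    and Ubar: "\<And>k. Ubar k = - (U (Suc k) - U k)"
    and D: "\<And>k. D k = - (N (Suc k) - N k)"
    and Dcal: "\<And>k. Dcal k = D k + Pd *\<^sub>v Ubar k"
    and ESO: "\<And>k. Xhat (Suc k) = (Abar p - L * Cbar p) *\<^sub>v Xhat k
                    + B0 p P0 *\<^sub>v Ubar k + L *\<^sub>v E k"
    and control: "\<And>k. Ubar k = - (K *\<^sub>v (E k + H *\<^sub>v (Fm p *\<^sub>v Xhat k)))"
  shows "(\<forall>k. E (Suc k) @\<^sub>v Xhat (Suc k)
              = Gmat p P0 K H L *\<^sub>v (E k @\<^sub>v Xhat k) + (Dcal k @\<^sub>v 0\<^sub>v (2*p)))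
       \<and> Tmat p * Tinv p = 1\<^sub>m (3*p) \<and> Tinv p * Tmat p = 1\<^sub>m (3*p)
       \<and> Tmat p * Gmat p P0 K H L * Tinv p
           = four_block_mat (1\<^sub>m p - P0 * K) (- (P0 * K * H * Fm p))
                            (0\<^sub>m (2*p) p) (Abar p - L * Cbar p)
       \<and> char_poly (Gmat p P0 K H L)
           = char_poly (1\<^sub>m p - P0 * K) * char_poly (Abar p - L * Cbar p)
       \<and> (\<forall>z::complex. eigenvalue (map_mat complex_of_real (Gmat p P0 K H L)) z
            \<longleftrightarrow> eigenvalue (map_mat complex_of_real (1\<^sub>m p - P0 * K)) z
              \<or> eigenvalue (map_mat complex_of_real (Abar p - L * Cbar p)) z)"
proof -
  note C = Cbar_c[of p] and F = Fm_c[of p] and A = Abar_c[of p] and B = B0_c[OF P0]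
  have PK: "P0 * K \<in> carrier_mat p p" using P0 K by simp
  have PKHF: "P0 * K * H * Fm p \<in> carrier_mat p (2*p)" using PK H F by simp
  have BK: "B0 p P0 * K \<in> carrier_mat (2*p) p" using B K by simp
  have BKHF: "B0 p P0 * K * H * Fm p \<in> carrier_mat (2*p) (2*p)" using BK H F by simp
  have LC: "L * Cbar p \<in> carrier_mat (2*p) (2*p)" using L C by simp
  have ALC: "Abar p - L * Cbar p \<in> carrier_mat (2*p) (2*p)" using A LC by simp
  have G11: "1\<^sub>m p - P0 * K \<in> carrier_mat p p" using PK by simp
  have c12: "- (P0 * K * H * Fm p) \<in> carrier_mat p (2*p)" using PKHF by simp
  have c21: "L - B0 p P0 * K \<in> carrier_mat (2*p) p" using BK by simp
  have c22: "Abar p - L * Cbar p - B0 p P0 * K * H * Fm p \<in> carrier_mat (2*p) (2*p)" using BKHF by simp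
  have dyn: "E (Suc k) @\<^sub>v Xhat (Suc k)
              = Gmat p P0 K H L *\<^sub>v (E k @\<^sub>v Xhat k) + (Dcal k @\<^sub>v 0\<^sub>v (2*p))" for k
  proof -
    define e where "e = E k"
    define x where "x = Xhat k"
    define kh where "kh = K *\<^sub>v (H *\<^sub>v (Fm p *\<^sub>v x))"
    define ke where "ke = K *\<^sub>v e"
    have Yc: "Y j \<in> carrier_vec p" for j unfolding plant
      using mult_mat_vec_carrier[OF add_carrier_mat[OF Pd, of P0] U[of j]] N[of j] by simp
    have Ec: "E j \<in> carrier_vec p" for j unfolding err using Yc[of j] Yd by simp
    have ec: "e \<in> carrier_vec p" unfolding e_def by (rule Ec)
    have xc: "x \<in> carrier_vec (2*p)" unfolding x_def by (rule Xhat)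
    have Fx: "Fm p *\<^sub>v x \<in> carrier_vec p" using F xc by simp
    have HFx: "H *\<^sub>v (Fm p *\<^sub>v x) \<in> carrier_vec p" using H Fx by simp
    have khc: "kh \<in> carrier_vec m" unfolding kh_def using K HFx by simp
    have kec: "ke \<in> carrier_vec m" unfolding ke_def using K ec by simp
    have Dc: "D k \<in> carrier_vec p" unfolding D using N[of k] N[of "Suc k"] by simp
    have PdU': "Pd *\<^sub>v Ubar k \<in> carrier_vec p" using carrier_matD(1)[OF Pd] unfolding carrier_vec_def by simp
    have Dcc: "Dcal k \<in> carrier_vec p" unfolding Dcal using Dc PdU' by simp
    have Ub: "Ubar k = - ke - kh"
    proof -
      have "Ubar k = - (ke + kh)" unfolding control e_def[symmetric] x_def[symmetric] ke_def kh_def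
        by (subst mult_add_distrib_mat_vec[OF K ec HFx]) (rule refl)
      thus ?thesis using kec khc by (intro eq_vecI) auto
    qed
    have PUb: "P0 *\<^sub>v Ubar k = - (P0 *\<^sub>v ke) - P0 *\<^sub>v kh"
      unfolding Ub by (subst mult_minus_distrib_mat_vec[OF P0], insert kec khc, auto simp: neg_mv[OF P0 kec])
    have BUb: "B0 p P0 *\<^sub>v Ubar k = - (B0 p P0 *\<^sub>v ke) - B0 p P0 *\<^sub>v kh"
      unfolding Ub by (subst mult_minus_distrib_mat_vec[OF B], insert kec khc, auto simp: neg_mv[OF B kec])
    have Ub2: "Ubar k = U k - U (Suc k)" unfolding Ubar using U[of k] U[of "Suc k"] by (intro eq_vecI) auto
    have PU: "P0 *\<^sub>v Ubar k = P0 *\<^sub>v U k - P0 *\<^sub>v U (Suc k)"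
      unfolding Ub2 by (rule mult_minus_distrib_mat_vec[OF P0 U U])
    have PdU: "Pd *\<^sub>v Ubar k = Pd *\<^sub>v U k - Pd *\<^sub>v U (Suc k)"
      unfolding Ub2 by (rule mult_minus_distrib_mat_vec[OF Pd U U])
    have PP: "(P0 + Pd) *\<^sub>v U j = P0 *\<^sub>v U j + Pd *\<^sub>v U j" for j
      by (rule add_mult_distrib_mat_vec[OF P0 Pd U])
    have E1: "E (Suc k) = e + P0 *\<^sub>v Ubar k + Dcal k"
      unfolding e_def err plant PP Dcal D PU PdU using P0 Pd U[of k] U[of "Suc k"] N[of k] N[of "Suc k"] Yd
      by (intro eq_vecI) auto
    have G11v: "(1\<^sub>m p - P0 * K) *\<^sub>v e = e - P0 *\<^sub>v ke"
      unfolding ke_def by (subst minus_mult_distrib_mat_vec[OF one_carrier_mat PK ec]) (insert P0 K ec, simp)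
    have G12v: "(- (P0 * K * H * Fm p)) *\<^sub>v x = - (P0 *\<^sub>v kh)"
    proof -
      have PKH: "P0 * K * H \<in> carrier_mat p p" using PK H by simp
      have "(- (P0 * K * H * Fm p)) *\<^sub>v x = - (P0 * K * H * Fm p *\<^sub>v x)"
        by (rule uminus_mult_mat_vec) (insert F xc, simp add: carrier_matD)
      also have "P0 * K * H * Fm p *\<^sub>v x = P0 *\<^sub>v kh" unfolding kh_def
        by (simp only: assoc_mult_mat_vec[OF PKH F xc] assoc_mult_mat_vec[OF PK H Fx] assoc_mult_mat_vec[OF P0 K HFx])
      finally show ?thesis .
    qed
    have G21v: "(L - B0 p P0 * K) *\<^sub>v e = L *\<^sub>v e - B0 p P0 *\<^sub>v ke"
      unfolding ke_def by (subst minus_mult_distrib_mat_vec[OF L BK ec]) (insert B K ec, simp)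
    have G22v: "(Abar p - L * Cbar p - B0 p P0 * K * H * Fm p) *\<^sub>v x
        = (Abar p - L * Cbar p) *\<^sub>v x - B0 p P0 *\<^sub>v kh"
    proof -
      have BKH: "B0 p P0 * K * H \<in> carrier_mat (2*p) p" using BK H by simp
      have "(Abar p - L * Cbar p - B0 p P0 * K * H * Fm p) *\<^sub>v x
        = (Abar p - L * Cbar p) *\<^sub>v x - B0 p P0 * K * H * Fm p *\<^sub>v x"
        by (rule minus_mult_distrib_mat_vec[OF ALC BKHF xc])
      also have "B0 p P0 * K * H * Fm p *\<^sub>v x = B0 p P0 *\<^sub>v kh" unfolding kh_def
        by (simp only: assoc_mult_mat_vec[OF BKH F xc] assoc_mult_mat_vec[OF BK H Fx] assoc_mult_mat_vec[OF B K HFx])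
      finally show ?thesis .
    qed
    have Gv: "Gmat p P0 K H L *\<^sub>v (e @\<^sub>v x) = ((e - P0 *\<^sub>v ke) + - (P0 *\<^sub>v kh)) @\<^sub>v
        ((L *\<^sub>v e - B0 p P0 *\<^sub>v ke) + ((Abar p - L * Cbar p) *\<^sub>v x - B0 p P0 *\<^sub>v kh))"
      unfolding Gmat_def G11v[symmetric] G12v[symmetric] G21v[symmetric] G22v[symmetric]
      by (rule four_block_mat_mult_vec[OF G11 c12 c21 c22 ec xc])
    have a1: "E (Suc k) = (e - P0 *\<^sub>v ke + - (P0 *\<^sub>v kh)) + Dcal k"
      unfolding E1 PUb using P0 ec kec khc Dcc by (intro eq_vecI) auto
    have a2: "Xhat (Suc k) = (L *\<^sub>v e - B0 p P0 *\<^sub>v ke + ((Abar p - L * Cbar p) *\<^sub>v x - B0 p P0 *\<^sub>v kh)) + 0\<^sub>v (2*p)"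
      unfolding ESO x_def[symmetric] e_def[symmetric] BUb using B L ALC ec kec khc xc
      by (intro eq_vecI) auto
    have c1: "(e - P0 *\<^sub>v ke + - (P0 *\<^sub>v kh)) \<in> carrier_vec p"
      using P0 ec kec khc by simp
    have c2: "(L *\<^sub>v e - B0 p P0 *\<^sub>v ke + ((Abar p - L * Cbar p) *\<^sub>v x - B0 p P0 *\<^sub>v kh)) \<in> carrier_vec (2*p)"
      using B L ALC ec kec khc xc by simp
    show ?thesis
      unfolding e_def[symmetric] x_def[symmetric] Gv append_vec_add[OF c1 Dcc c2 zero_carrier_vec]
      using a1 a2 by simp
  qed
  have cpG: "char_poly (Gmat p P0 K H L)
           = char_poly (1\<^sub>m p - P0 * K) * char_poly (Abar p - L * Cbar p)"
    by (rule cp_G[OF P0 K H L])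
  have Gc': "Gmat p P0 K H L \<in> carrier_mat (3*p) (3*p)" by (rule Gc[OF P0 K H L])
  have ev: "eigenvalue (map_mat complex_of_real (Gmat p P0 K H L)) z
            \<longleftrightarrow> eigenvalue (map_mat complex_of_real (1\<^sub>m p - P0 * K)) z
              \<or> eigenvalue (map_mat complex_of_real (Abar p - L * Cbar p)) z" for z
  proof -
    interpret MP: map_poly_comm_ring_hom "complex_of_real" ..
    have m1: "map_mat complex_of_real (Gmat p P0 K H L) \<in> carrier_mat (3*p) (3*p)" using Gc' by simp
    have m2: "map_mat complex_of_real (1\<^sub>m p - P0 * K) \<in> carrier_mat p p" using G11 by simp
    have m3: "map_mat complex_of_real (Abar p - L * Cbar p) \<in> carrier_mat (2*p) (2*p)" using ALC by simp
    show ?thesis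
      unfolding eigenvalue_root_char_poly[OF m1] eigenvalue_root_char_poly[OF m2] eigenvalue_root_char_poly[OF m3]
        of_real_hom.char_poly_hom[OF Gc'] of_real_hom.char_poly_hom[OF G11] of_real_hom.char_poly_hom[OF ALC] cpG
        MP.hom_mult by simp
  qed
  show ?thesis using dyn TTinv[of p] TGT[OF P0 K H L] cpG ev by blast
qed

end
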